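(* Fix $q\ge2$ and $z\in\mathbb Z$, let $k=\lceil\log_q n\rceil+z$, $n'=n-k-2$ and $\Delta_n=\log_q n-\lceil\log_q n\rceil$. Then $$\lim_{n\to\infty}\frac{2^{n'E_{k,q}}}{\frac{q^n}{n}\cdot q^{\Delta_n-z-2}\,e^{-(q-1)q^{\Delta_n-z-1}}}=1.$$
   Context: $\Sigma_q=\{0,\dots,q-1\}$. A vector in $\Sigma_q^m$ is a $k$-RLL vector if $m<k$ or it has no run of $k$ consecutive zeros; $a_q(m,k)$ is their number, and $E_{k,q}=\lim_{m\to\infty}\frac{\log_2 a_q(m,k)}{m}$. It is known (Jain et al.) that $\lim_{k\to\infty}\frac{(q-1)(\log_2 e)q^{-k-2}}{\log_2 q-E_{k,q}}=1$. *)

theory Defs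
  imports Complex_Main
begin

definition is_RLL :: "nat \<Rightarrow> nat list \<Rightarrow> bool" where
  "is_RLL k xs \<longleftrightarrow> length xs < k \<or>
     \<not> (\<exists>i. i + k \<le> length xs \<and> (\<forall>j<k. xs ! (i + j) = 0))"

definition a_RLL :: "nat \<Rightarrow> nat \<Rightarrow> nat \<Rightarrow> nat" where
  "a_RLL q m k = card {xs :: nat list. length xs = m \<and> set xs \<subseteq> {0..<q} \<and> is_RLL k xs}"

definition E_RLL :: "nat \<Rightarrow> nat \<Rightarrow> real" where
  "E_RLL k q = lim (\<lambda>m. log 2 (real (a_RLL q m k)) / real m)"

end

theory Submission
  imports Defs
begin


definition run :: "nat \<Rightarrow> nat list \<Rightarrow> bool" where
  "run k xs \<longleftrightarrow> (\<exists>i. i + k \<le> length xs \<and> (\<forall>j<k. xs ! (i + j) = 0))"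

lemma is_RLL_run: "is_RLL k xs \<longleftrightarrow> \<not> run k xs"
  unfolding is_RLL_def run_def by auto

lemma run_append:
  assumes "c \<noteq> 0" "t < k"
  shows "run k (ys @ c # replicate t 0) \<longleftrightarrow> run k ys"
proof
  assume "run k (ys @ c # replicate t 0)"
  then obtain i where i: "i + k \<le> length ys + 1 + t"
    and z: "\<forall>j<k. (ys @ c # replicate t 0) ! (i + j) = 0" unfolding run_def by auto
  show "run k ys"
  proof (cases "i + k \<le> length ys")
    case True
    then have "\<forall>j<k. ys ! (i + j) = 0" using z by (auto simp: nth_append)
    then show ?thesis using True unfolding run_def by auto
  next
    case False
    show ?thesis
    proof (cases "i \<le> length ys")
      case True
      have "length ys - i < k" using False assms(2) by arith
      then have "(ys @ c # replicate t 0) ! (i + (length ys - i)) = 0" using z by blast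
      then have "(ys @ c # replicate t 0) ! (length ys) = 0" using True by simp
      then show ?thesis using assms by simp
    next
      case False
      then show ?thesis using i assms by auto
    qed
  qed
next
  assume "run k ys"
  then obtain i where i: "i + k \<le> length ys" and z: "\<forall>j<k. ys ! (i + j) = 0"
    unfolding run_def by auto
  have "\<forall>j<k. (ys @ c # replicate t 0) ! (i + j) = 0" using i z by (auto simp: nth_append)
  then show "run k (ys @ c # replicate t 0)" using i unfolding run_def by (intro exI[of _ i]) auto
qed

lemma decomp: "xs = replicate (length xs) 0 \<or> (\<exists>ys c t. c \<noteq> 0 \<and> xs = ys @ c # replicate t 0)"
proof (induction xs rule: rev_induct)
  case Nil then show ?case by simp
next
  case (snoc x xs)
  show ?case
  proof (cases "x = 0")
    case False
    then show ?thesis by (intro disjI2 exI[of _ xs] exI[of _ x] exI[of _ 0]) auto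
  next
    case True
    from snoc show ?thesis
    proof
      assume "xs = replicate (length xs) 0"
      then have "xs @ [x] = replicate (length (xs @ [x])) 0" using True
        by (metis length_append_singleton replicate_Suc replicate_append_same)
      then show ?thesis by blast
    next
      assume "\<exists>ys c t. c \<noteq> 0 \<and> xs = ys @ c # replicate t 0"
      then obtain ys c t where "c \<noteq> 0" "xs = ys @ c # replicate t 0" by blast
      then have "xs @ [x] = ys @ c # replicate (Suc t) 0" using True
        by (simp add: replicate_append_same[symmetric])
      then show ?thesis using \<open>c \<noteq> 0\<close> by blast
    qed
  qed
qed

lemma run_replicate: "k \<le> m \<Longrightarrow> run k (replicate m 0)"
  unfolding run_def by (intro exI[of _ 0]) auto

lemma run_long: assumes "k \<le> t" shows "run k (ys @ c # replicate t 0)"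
proof -
  have "\<forall>j<k. (ys @ c # replicate t 0) ! (length ys + 1 + (t - k) + j) = 0"
    using assms by (auto simp: nth_append)
  then show ?thesis unfolding run_def using assms
    by (intro exI[of _ "length ys + 1 + (t - k)"]) auto
qed

lemma decomp_unique:
  assumes "c \<noteq> 0" "c' \<noteq> 0" "ys @ c # replicate t 0 = ys' @ c' # replicate t' 0"
  shows "ys = ys' \<and> c = c' \<and> t = t'"
proof -
  have r: "replicate t 0 @ c # rev ys = replicate t' 0 @ c' # rev ys'"
    using arg_cong[OF assms(3), of rev] by simp
  have tw: "takeWhile (\<lambda>x. x = 0) (replicate n 0 @ d # zs) = replicate n 0" if "d \<noteq> 0" for n d zs
    using that by (induct n) auto
  have "takeWhile (\<lambda>x. x = 0) (replicate t 0 @ c # rev ys) = replicate t 0"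
    using assms(1) tw by blast
  moreover have "takeWhile (\<lambda>x. x = 0) (replicate t' 0 @ c' # rev ys') = replicate t' 0"
    using assms(2) tw by blast
  ultimately have "t = t'" using r by (metis length_replicate)
  then show ?thesis using r by simp
qed

definition S :: "nat \<Rightarrow> nat \<Rightarrow> nat \<Rightarrow> nat list set" where
  "S q k m = {xs. length xs = m \<and> set xs \<subseteq> {0..<q} \<and> is_RLL k xs}"

lemma finite_S: "finite (S q k m)"
proof -
  have "S q k m \<subseteq> {xs. set xs \<subseteq> {0..<q} \<and> length xs = m}" unfolding S_def by auto
  then show ?thesis using finite_lists_length_eq[of "{0..<q}" m] finite_subset by blast
qed

lemma S_small: "m < k \<Longrightarrow> card (S q k m) = q ^ m"
proof -
  assume "m < k"
  then have "S q k m = {xs. set xs \<subseteq> {0..<q} \<and> length xs = m}"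
    unfolding S_def is_RLL_def by auto
  then show ?thesis using card_lists_length_eq[of "{0..<q}" m] by simp
qed

lemma S_big:
  assumes "1 \<le> k" "k \<le> m"
  shows "S q k m = (\<Union>t<k. (\<lambda>(ys, c). ys @ c # replicate t 0) ` (S q k (m - 1 - t) \<times> {1..<q}))"
    (is "_ = ?R")
proof
  show "S q k m \<subseteq> ?R"
  proof
    fix xs assume xs: "xs \<in> S q k m"
    then have nr: "\<not> run k xs" and l: "length xs = m" and s: "set xs \<subseteq> {0..<q}"
      unfolding S_def is_RLL_run by auto
    have "xs \<noteq> replicate (length xs) 0" using nr run_replicate[of k m] l assms by metis
    then obtain ys c t where c: "c \<noteq> 0" and e: "xs = ys @ c # replicate t 0" using decomp by blast
    have t: "t < k" using run_long[of k t ys c] nr e by (cases "k \<le> t") auto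
    have "ys \<in> S q k (m - 1 - t)" using nr e l s run_append[OF c t, of ys]
      unfolding S_def is_RLL_run by auto
    moreover have "c \<in> {1..<q}" using s e c by auto
    ultimately show "xs \<in> ?R" using t e by force
  qed
next
  show "?R \<subseteq> S q k m"
  proof
    fix xs assume "xs \<in> ?R"
    then obtain t ys c where t: "t < k" and ys: "ys \<in> S q k (m - 1 - t)" and c: "c \<in> {1..<q}"
      and e: "xs = ys @ c # replicate t 0" by auto
    have c0: "c \<noteq> 0" using c by auto
    show "xs \<in> S q k m" using ys c t assms run_append[OF c0 t, of ys] e
      unfolding S_def is_RLL_run by auto
  qed
qed

lemma card_S_big:
  assumes "1 \<le> k" "k \<le> m"
  shows "card (S q k m) = (q - 1) * (\<Sum>t<k. card (S q k (m - 1 - t)))"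
proof -
  let ?f = "\<lambda>t. (\<lambda>(ys, c). ys @ c # replicate t 0)"
  have "card (S q k m) = (\<Sum>t<k. card (?f t ` (S q k (m - 1 - t) \<times> {1..<q})))"
    unfolding S_big[OF assms]
  proof (rule card_UN_disjoint)
    show "finite {..<k}" by simp
    show "\<forall>i\<in>{..<k}. finite (?f i ` (S q k (m - 1 - i) \<times> {1..<q}))"
      using finite_S by auto
    show "\<forall>i\<in>{..<k}. \<forall>j\<in>{..<k}. i \<noteq> j \<longrightarrow>
      ?f i ` (S q k (m - 1 - i) \<times> {1..<q}) \<inter> ?f j ` (S q k (m - 1 - j) \<times> {1..<q}) = {}"
    proof (intro ballI impI equals0I)
      fix i j xs assume ij: "i \<noteq> j" and xs: "xs \<in> ?f i ` (S q k (m - 1 - i) \<times> {1..<q}) \<inter> ?f j ` (S q k (m - 1 - j) \<times> {1..<q})"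
      from xs obtain u where u: "u \<in> S q k (m - 1 - i) \<times> {1..<q}" "xs = ?f i u" by blast
      from xs obtain v where v: "v \<in> S q k (m - 1 - j) \<times> {1..<q}" "xs = ?f j v" by blast
      obtain ys c where u': "u = (ys, c)" by (cases u)
      obtain ys' c' where v': "v = (ys', c')" by (cases v)
      have c: "c \<in> {1..<q}" "c' \<in> {1..<q}" using u v u' v' by auto
      have e: "xs = ys @ c # replicate i 0" "xs = ys' @ c' # replicate j 0" using u v u' v' by auto
      have "c \<noteq> 0" "c' \<noteq> 0" using c by auto
      then have "i = j" using decomp_unique[of c c' ys i ys' j] e by simp
      then show False using ij by simp
    qed
  qed
  also have "\<dots> = (\<Sum>t<k. card (S q k (m - 1 - t)) * (q - 1))"
  proof (rule sum.cong[OF refl])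
    fix t
    have "inj_on (?f t) (S q k (m - 1 - t) \<times> {1..<q})"
    proof (rule inj_onI)
      fix u v assume u: "u \<in> S q k (m - 1 - t) \<times> {1..<q}" and v: "v \<in> S q k (m - 1 - t) \<times> {1..<q}"
        and uv: "?f t u = ?f t v"
      obtain ys c where u': "u = (ys, c)" by (cases u)
      obtain ys' c' where v': "v = (ys', c')" by (cases v)
      have "c \<noteq> 0" "c' \<noteq> 0" using u v u' v' by auto
      then show "u = v" using decomp_unique[of c c' ys t ys' t] uv u' v' by simp
    qed
    then show "card (?f t ` (S q k (m - 1 - t) \<times> {1..<q})) = card (S q k (m - 1 - t)) * (q - 1)"
      by (simp add: card_image card_cartesian_product)
  qed
  finally show ?thesis by (simp add: sum_distrib_left mult.commute)
qed

lemma a_RLL_S: "a_RLL q m k = card (S q k m)"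
  unfolding a_RLL_def S_def by simp



definition hk :: "nat \<Rightarrow> nat \<Rightarrow> real \<Rightarrow> real" where
  "hk q k x = (real q - 1) * (\<Sum>t<k. x ^ (t + 1))"

lemma geom: "(1 - x) * (\<Sum>t<k. x ^ (t + 1)) = x - x ^ (k + 1)" for x :: real
proof (induction k)
  case 0 then show ?case by simp
next
  case (Suc k)
  have "(1 - x) * (\<Sum>t<Suc k. x ^ (t + 1)) = (1 - x) * (\<Sum>t<k. x ^ (t + 1)) + (1 - x) * x ^ (k + 1)"
    by (simp add: algebra_simps)
  also have "\<dots> = x - x ^ (Suc k + 1)" using Suc by (simp add: algebra_simps)
  finally show ?case .
qed

lemma a_small: "m < k \<Longrightarrow> real (a_RLL q m k) = real q ^ m"
  by (simp add: a_RLL_S S_small)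

lemma a_big: "1 \<le> q \<Longrightarrow> 1 \<le> k \<Longrightarrow> k \<le> m \<Longrightarrow>
   real (a_RLL q m k) = (real q - 1) * (\<Sum>t<k. real (a_RLL q (m - 1 - t) k))"
  by (simp add: a_RLL_S card_S_big of_nat_diff)

lemma pow_shift:
  fixes x :: real
  assumes "x > 0" "t < k" "k \<le> m"
  shows "(1 / x) ^ (m - 1 - t) = (1 / x) ^ m * x ^ (t + 1)"
proof -
  have "m = (m - 1 - t) + (t + 1)" using assms by simp
  then have "(1 / x) ^ m = (1 / x) ^ (m - 1 - t) * (1 / x) ^ (t + 1)"
    by (metis power_add)
  then show ?thesis using assms(1) by (simp add: power_one_over field_simps)
qed

lemma a_bounds:
  fixes x :: real
  assumes q: "q \<ge> 2" and k: "k \<ge> 1" and x: "x \<ge> 1 / real q" and h: "hk q k x = 1"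
  shows "(1 / x) ^ m \<le> real (a_RLL q m k) \<and> real (a_RLL q m k) \<le> (real q * x) ^ k * (1 / x) ^ m"
proof (induction m rule: less_induct)
  case (less m)
  have qpos: "real q > 0" using q by simp
  have xpos: "x > 0" using x qpos by (smt (verit) divide_pos_pos)
  have qx: "real q * x \<ge> 1" using x qpos by (simp add: field_simps)
  have ix: "1 / x \<le> real q" using x qpos xpos by (simp add: field_simps)
  show ?case
  proof (cases "m < k")
    case True
    have "(1 / x) ^ m \<le> real q ^ m" using ix xpos by (intro power_mono) auto
    moreover have "real q ^ m = (real q * x) ^ m * (1 / x) ^ m"
      using xpos by (simp add: power_mult_distrib[symmetric])
    moreover have "(real q * x) ^ m \<le> (real q * x) ^ k" using qx True by (intro power_increasing) auto
    ultimately show ?thesis using True a_small[OF True, of q] xpos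
      by (simp add: mult_right_mono)
  next
    case False
    then have km: "k \<le> m" by simp
    have e: "real (a_RLL q m k) = (real q - 1) * (\<Sum>t<k. real (a_RLL q (m - 1 - t) k))"
      using a_big[OF _ k km] q by simp
    have hs: "(real q - 1) * (\<Sum>t<k. (1 / x) ^ (m - 1 - t)) = (1 / x) ^ m"
    proof -
      have "(\<Sum>t<k. (1 / x) ^ (m - 1 - t)) = (\<Sum>t<k. (1 / x) ^ m * x ^ (t + 1))"
        using pow_shift[OF xpos _ km] by (intro sum.cong) auto
      also have "\<dots> = (1 / x) ^ m * (\<Sum>t<k. x ^ (t + 1))" by (simp add: sum_distrib_left)
      finally have "(real q - 1) * (\<Sum>t<k. (1 / x) ^ (m - 1 - t)) = (1 / x) ^ m * hk q k x"
        unfolding hk_def by (simp add: algebra_simps)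
      then show ?thesis using h by simp
    qed
    have q1: "real q - 1 \<ge> 0" using q by simp
    have lo: "(\<Sum>t<k. (1 / x) ^ (m - 1 - t)) \<le> (\<Sum>t<k. real (a_RLL q (m - 1 - t) k))"
      using less km k by (intro sum_mono) auto
    have up: "(\<Sum>t<k. real (a_RLL q (m - 1 - t) k)) \<le> (\<Sum>t<k. (real q * x) ^ k * (1 / x) ^ (m - 1 - t))"
      using less km k by (intro sum_mono) auto
    have "(1 / x) ^ m \<le> real (a_RLL q m k)"
      using mult_left_mono[OF lo q1] hs e by simp
    moreover have "real (a_RLL q m k) \<le> (real q * x) ^ k * (1 / x) ^ m"
    proof -
      have "real (a_RLL q m k) \<le> (real q - 1) * (\<Sum>t<k. (real q * x) ^ k * (1 / x) ^ (m - 1 - t))"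
        using mult_left_mono[OF up q1] e by simp
      also have "\<dots> = (real q * x) ^ k * ((real q - 1) * (\<Sum>t<k. (1 / x) ^ (m - 1 - t)))"
        by (simp add: sum_distrib_left algebra_simps)
      finally show ?thesis using hs by simp
    qed
    ultimately show ?thesis by simp
  qed
qed

lemma E_root:
  fixes x :: real
  assumes q: "q \<ge> 2" and k: "k \<ge> 1" and x: "x \<ge> 1 / real q" and h: "hk q k x = 1"
  shows "E_RLL k q = - log 2 x"
proof -
  have qpos: "real q > 0" using q by simp
  have xpos: "x > 0" using x qpos by (smt (verit) divide_pos_pos)
  define C where "C = (real q * x) ^ k"
  have Cpos: "C > 0" unfolding C_def using xpos qpos by simp
  let ?f = "\<lambda>m. log 2 (real (a_RLL q m k)) / real m"
  have lo: "log 2 (1 / x) \<le> ?f m" if "m \<ge> 1" for m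
  proof -
    have "real m * log 2 (1 / x) = log 2 ((1 / x) ^ m)" using xpos by (simp add: log_nat_power)
    also have "\<dots> \<le> log 2 (real (a_RLL q m k))"
      using a_bounds[OF q k x h, of m] xpos by (intro log_mono) auto
    finally show ?thesis using that by (simp add: field_simps)
  qed
  have up: "?f m \<le> log 2 C / real m + log 2 (1 / x)" if "m \<ge> 1" for m
  proof -
    have "log 2 (real (a_RLL q m k)) \<le> log 2 (C * (1 / x) ^ m)"
    proof (rule log_mono)
      have "0 < (1 / x) ^ m" using xpos by simp
      then show "0 < real (a_RLL q m k)" using a_bounds[OF q k x h, of m] by linarith
      show "real (a_RLL q m k) \<le> C * (1 / x) ^ m" using a_bounds[OF q k x h, of m] unfolding C_def by simp
    qed simp
    also have "\<dots> = log 2 C + real m * log 2 (1 / x)"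
      using xpos Cpos by (simp add: log_mult log_nat_power)
    finally show ?thesis using that by (simp add: field_simps)
  qed
  have "?f \<longlonglongrightarrow> log 2 (1 / x)"
  proof (rule tendsto_sandwich[of "\<lambda>_. log 2 (1 / x)" _ _ "\<lambda>m. log 2 C / real m + log 2 (1 / x)"])
    show "\<forall>\<^sub>F m in sequentially. log 2 (1 / x) \<le> ?f m"
      using lo eventually_sequentially by blast
    show "\<forall>\<^sub>F m in sequentially. ?f m \<le> log 2 C / real m + log 2 (1 / x)"
      using up eventually_sequentially by blast
    show "(\<lambda>m. log 2 C / real m + log 2 (1 / x)) \<longlonglongrightarrow> log 2 (1 / x)"
      using tendsto_add[OF lim_const_over_n[of "log 2 C"] tendsto_const] by simp
  qed simp
  then have "E_RLL k q = log 2 (1 / x)" unfolding E_RLL_def by (rule limI)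
  then show ?thesis using xpos by (simp add: log_divide)
qed



definition bq :: "nat \<Rightarrow> real" where "bq q = (real q + 1) / (2 * real q)"

lemma hk_geom: assumes "x \<noteq> 1" shows "hk q k x = (real q - 1) * (x - x ^ (k + 1)) / (1 - x)"
proof -
  have "1 - x \<noteq> 0" using assms by simp
  then have "(\<Sum>t<k. x ^ (t + 1)) = (x - x ^ (k + 1)) / (1 - x)"
    by (metis geom nonzero_mult_div_cancel_left)
  then show ?thesis unfolding hk_def by simp
qed

lemma root_exists:
  assumes q: "q \<ge> 2" and b: "bq q ^ (k + 1) \<le> 1 / 2"
  shows "\<exists>x. 1 / real q \<le> x \<and> x \<le> bq q \<and> hk q k x = 1"
proof (rule IVT')
  have qr: "real q \<ge> 2" using q by simp
  have "hk q k (1 / real q) = (real q - 1) * (1 / real q - (1 / real q) ^ (k + 1)) / (1 - 1 / real q)"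
    using qr by (intro hk_geom) auto
  also have "\<dots> = real q * (1 / real q - (1 / real q) ^ (k + 1))"
    using qr by (simp add: field_simps)
  also have "\<dots> \<le> real q * (1 / real q)"
    using qr by (intro mult_left_mono) auto
  also have "\<dots> = 1" using qr by simp
  finally show "hk q k (1 / real q) \<le> 1" .
  have b1: "bq q < 1" "bq q > 0" using qr unfolding bq_def by (auto simp: field_simps)
  have "1 = (real q - 1) * (bq q - 1 / 2) / (1 - bq q)"
    using qr unfolding bq_def by (simp add: field_simps)
  also have "\<dots> \<le> (real q - 1) * (bq q - bq q ^ (k + 1)) / (1 - bq q)"
    using qr b b1 by (intro divide_right_mono mult_left_mono) auto
  also have "\<dots> = hk q k (bq q)" using b1 by (intro hk_geom[symmetric]) auto
  finally show "1 \<le> hk q k (bq q)" .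
  show "1 / real q \<le> bq q" using qr unfolding bq_def by (simp add: field_simps)
  show "continuous_on {1 / real q..bq q} (hk q k)"
    unfolding hk_def by (intro continuous_intros)
qed

definition X :: "nat \<Rightarrow> nat \<Rightarrow> real" where
  "X q k = (SOME x. 1 / real q \<le> x \<and> x \<le> bq q \<and> hk q k x = 1)"

definition good :: "nat \<Rightarrow> nat \<Rightarrow> bool" where
  "good q k \<longleftrightarrow> k \<ge> 1 \<and> bq q ^ (k + 1) \<le> 1 / 2"

lemma eventually_good: assumes "q \<ge> 2" shows "eventually (good q) sequentially"
proof -
  have qr: "real q \<ge> 2" using assms by simp
  have b1: "bq q < 1" "bq q > 0" using qr unfolding bq_def by (auto simp: field_simps)
  have "(\<lambda>k. bq q ^ k) \<longlonglongrightarrow> 0" using b1 by (intro LIMSEQ_realpow_zero) auto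
  then have "eventually (\<lambda>k. bq q ^ k < 1 / 2) sequentially"
    by (rule order_tendstoD) simp
  moreover have "bq q ^ (k + 1) \<le> bq q ^ k" for k
    using b1 by (simp add: mult_left_le_one_le)
  ultimately have e1: "eventually (\<lambda>k. bq q ^ (k + 1) \<le> 1 / 2) sequentially"
    by (elim eventually_mono) (metis less_eq_real_def order_trans)
  have e2: "eventually (\<lambda>k. k \<ge> 1) sequentially" by (rule eventually_ge_at_top)
  show ?thesis using eventually_conj[OF e2 e1] by (elim eventually_mono) (simp add: good_def)
qed

lemma X_props:
  assumes q: "q \<ge> 2" and g: "good q k"
  shows "1 / real q \<le> X q k" "X q k \<le> bq q" "hk q k (X q k) = 1"
    "E_RLL k q = - log 2 (X q k)"
    "real q * X q k - 1 = (real q - 1) * X q k ^ (k + 1)"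
proof -
  have "\<exists>x. 1 / real q \<le> x \<and> x \<le> bq q \<and> hk q k x = 1"
    using root_exists[OF q] g unfolding good_def by blast
  then have P: "1 / real q \<le> X q k \<and> X q k \<le> bq q \<and> hk q k (X q k) = 1"
    unfolding X_def by (rule someI_ex)
  then show "1 / real q \<le> X q k" "X q k \<le> bq q" "hk q k (X q k) = 1" by auto
  show "E_RLL k q = - log 2 (X q k)"
    using E_root[OF q _ _ ] P g unfolding good_def by blast
  have "(1 - X q k) * hk q k (X q k) = (real q - 1) * (X q k - X q k ^ (k + 1))"
    unfolding hk_def by (metis geom mult.left_commute)
  then have h: "1 - X q k = (real q - 1) * X q k - (real q - 1) * X q k ^ (k + 1)"
    using P by (simp add: right_diff_distrib)
  have "real q * X q k = (real q - 1) * X q k + X q k" by (simp add: algebra_simps)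
  then show "real q * X q k - 1 = (real q - 1) * X q k ^ (k + 1)"
    using h by linarith
qed

definition dd :: "nat \<Rightarrow> nat \<Rightarrow> real" where "dd q k = real q * X q k - 1"
definition eps :: "nat \<Rightarrow> nat \<Rightarrow> real" where "eps q k = (real q - 1) / real q ^ (k + 1)"

lemma dd_bounds:
  assumes q: "q \<ge> 2" and g: "good q k"
  shows "0 < dd q k" "dd q k \<le> (real q - 1) * bq q ^ (k + 1)"
    "dd q k / eps q k = (1 + dd q k) ^ (k + 1)"
proof -
  have qr: "real q \<ge> 2" using q by simp
  have xp: "X q k > 0" using X_props(1)[OF q g] qr
    by (smt (verit) divide_pos_pos)
  have e: "dd q k = (real q - 1) * X q k ^ (k + 1)" using X_props(5)[OF q g] unfolding dd_def .
  show "0 < dd q k" unfolding e using qr xp by simp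
  show "dd q k \<le> (real q - 1) * bq q ^ (k + 1)" unfolding e
    using qr xp X_props(2)[OF q g] by (intro mult_left_mono power_mono) auto
  have "dd q k / eps q k = X q k ^ (k + 1) * real q ^ (k + 1)"
    unfolding e eps_def using qr by (simp add: field_simps)
  also have "\<dots> = (1 + dd q k) ^ (k + 1)" unfolding dd_def by (simp add: power_mult_distrib mult.commute)
  finally show "dd q k / eps q k = (1 + dd q k) ^ (k + 1)" .
qed

lemma kb_lim:
  assumes "0 < b" "b < (1::real)"
  shows "(\<lambda>k. (real k + 2) * b ^ (k + 1)) \<longlonglongrightarrow> 0"
proof -
  have "(\<lambda>n. real n * b ^ n + b ^ n) \<longlonglongrightarrow> 0 + 0"
    using assms by (intro tendsto_add powser_times_n_limit_0 LIMSEQ_realpow_zero) auto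
  then have "(\<lambda>n. real (Suc n) * b ^ (Suc n) + b ^ (Suc n)) \<longlonglongrightarrow> 0"
    using LIMSEQ_Suc by fastforce
  then show ?thesis by (simp add: algebra_simps)
qed

lemma G1:
  assumes q: "q \<ge> 2"
  shows "(\<lambda>k. (real k + 2) * ln (1 + dd q k)) \<longlonglongrightarrow> 0"
proof (rule tendsto_sandwich[of "\<lambda>_. 0" _ _ "\<lambda>k. (real q - 1) * ((real k + 2) * bq q ^ (k + 1))"])
  have qr: "real q \<ge> 2" using q by simp
  have b1: "bq q < 1" "bq q > 0" using qr unfolding bq_def by (auto simp: field_simps)
  show "eventually (\<lambda>k. 0 \<le> (real k + 2) * ln (1 + dd q k)) sequentially"
    using eventually_good[OF q]
  proof (elim eventually_mono)
    fix k assume g: "good q k"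
    have "ln (1 + dd q k) \<ge> 0" using dd_bounds(1)[OF q g] by simp
    then show "0 \<le> (real k + 2) * ln (1 + dd q k)" by simp
  qed
  show "eventually (\<lambda>k. (real k + 2) * ln (1 + dd q k) \<le> (real q - 1) * ((real k + 2) * bq q ^ (k + 1))) sequentially"
    using eventually_good[OF q]
  proof (elim eventually_mono)
    fix k assume g: "good q k"
    have "ln (1 + dd q k) \<le> dd q k" using dd_bounds(1)[OF q g] by (intro ln_add_one_self_le_self) auto
    also have "\<dots> \<le> (real q - 1) * bq q ^ (k + 1)" using dd_bounds(2)[OF q g] .
    finally have "(real k + 2) * ln (1 + dd q k) \<le> (real k + 2) * ((real q - 1) * bq q ^ (k + 1))"
      by (intro mult_left_mono) auto
    then show "(real k + 2) * ln (1 + dd q k) \<le> (real q - 1) * ((real k + 2) * bq q ^ (k + 1))"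
      by (simp add: ac_simps)
  qed
  show "(\<lambda>k. (real q - 1) * ((real k + 2) * bq q ^ (k + 1))) \<longlonglongrightarrow> 0"
    using tendsto_mult[OF tendsto_const kb_lim[OF b1(2) b1(1)], of "real q - 1"] by simp
qed simp

lemma dd_lim:
  assumes q: "q \<ge> 2"
  shows "dd q \<longlonglongrightarrow> 0"
proof (rule tendsto_sandwich[of "\<lambda>_. 0" _ _ "\<lambda>k. (real q - 1) * ((real k + 2) * bq q ^ (k + 1))"])
  have qr: "real q \<ge> 2" using q by simp
  have b1: "bq q < 1" "bq q > 0" using qr unfolding bq_def by (auto simp: field_simps)
  show "eventually (\<lambda>k. 0 \<le> dd q k) sequentially"
    using eventually_good[OF q] by (elim eventually_mono) (use dd_bounds[OF q] in force)
  show "eventually (\<lambda>k. dd q k \<le> (real q - 1) * ((real k + 2) * bq q ^ (k + 1))) sequentially"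
    using eventually_good[OF q]
  proof (elim eventually_mono)
    fix k assume g: "good q k"
    have "dd q k \<le> (real q - 1) * bq q ^ (k + 1)" using dd_bounds(2)[OF q g] .
    also have "\<dots> \<le> (real q - 1) * ((real k + 2) * bq q ^ (k + 1))"
      using qr b1 by (intro mult_left_mono) auto
    finally show "dd q k \<le> (real q - 1) * ((real k + 2) * bq q ^ (k + 1))" .
  qed
  show "(\<lambda>k. (real q - 1) * ((real k + 2) * bq q ^ (k + 1))) \<longlonglongrightarrow> 0"
    using tendsto_mult[OF tendsto_const kb_lim[OF b1(2) b1(1)], of "real q - 1"] by simp
qed simp

lemma G2:
  assumes q: "q \<ge> 2"
  shows "(\<lambda>k. ln (1 + dd q k) / eps q k) \<longlonglongrightarrow> 1"
proof -
  have A: "(\<lambda>k. ln (1 + dd q k) / dd q k) \<longlonglongrightarrow> 1"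
  proof (rule tendsto_sandwich[of "\<lambda>k. 1 - dd q k" _ _ "\<lambda>_. 1"])
    have "eventually (\<lambda>k. dd q k < 1) sequentially"
      using order_tendstoD(2)[OF dd_lim[OF q], of 1] by simp
    then show "eventually (\<lambda>k. 1 - dd q k \<le> ln (1 + dd q k) / dd q k) sequentially"
      using eventually_good[OF q]
    proof eventually_elim
      case (elim k)
      have p: "dd q k > 0" using dd_bounds(1)[OF q elim(2)] .
      have "dd q k - dd q k ^ 2 \<le> ln (1 + dd q k)"
        using p elim(1) by (intro ln_one_plus_pos_lower_bound) auto
      then show ?case using p by (simp add: field_simps power2_eq_square)
    qed
    show "eventually (\<lambda>k. ln (1 + dd q k) / dd q k \<le> 1) sequentially"
      using eventually_good[OF q]
    proof (elim eventually_mono)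
      fix k assume g: "good q k"
      have p: "dd q k > 0" using dd_bounds(1)[OF q g] .
      have "ln (1 + dd q k) \<le> dd q k" using p by (intro ln_add_one_self_le_self) auto
      then show "ln (1 + dd q k) / dd q k \<le> 1" using p by simp
    qed
    show "(\<lambda>k. 1 - dd q k) \<longlonglongrightarrow> 1" using tendsto_diff[OF tendsto_const dd_lim[OF q], of 1] by simp
  qed simp
  have B0: "(\<lambda>k. (real k + 1) * ln (1 + dd q k)) \<longlonglongrightarrow> 0"
  proof (rule tendsto_sandwich[of "\<lambda>_. 0" _ _ "\<lambda>k. (real k + 2) * ln (1 + dd q k)"])
    show "eventually (\<lambda>k. 0 \<le> (real k + 1) * ln (1 + dd q k)) sequentially"
      using eventually_good[OF q]
    proof (elim eventually_mono)
      fix k assume g: "good q k"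
      have "ln (1 + dd q k) \<ge> 0" using dd_bounds(1)[OF q g] by simp
      then show "0 \<le> (real k + 1) * ln (1 + dd q k)" by simp
    qed
    show "eventually (\<lambda>k. (real k + 1) * ln (1 + dd q k) \<le> (real k + 2) * ln (1 + dd q k)) sequentially"
      using eventually_good[OF q]
    proof (elim eventually_mono)
      fix k assume g: "good q k"
      have "ln (1 + dd q k) \<ge> 0" using dd_bounds(1)[OF q g] by simp
      then show "(real k + 1) * ln (1 + dd q k) \<le> (real k + 2) * ln (1 + dd q k)"
        by (intro mult_right_mono) auto
    qed
  qed (use G1[OF q] in auto)
  have B: "(\<lambda>k. (1 + dd q k) ^ (k + 1)) \<longlonglongrightarrow> 1"
  proof -
    have "(\<lambda>k. exp ((real k + 1) * ln (1 + dd q k))) \<longlonglongrightarrow> exp 0"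
      by (intro tendsto_exp B0)
    moreover have "eventually (\<lambda>k. exp ((real k + 1) * ln (1 + dd q k)) = (1 + dd q k) ^ (k + 1)) sequentially"
      using eventually_good[OF q]
    proof (elim eventually_mono)
      fix k assume g: "good q k"
      have p: "1 + dd q k > 0" using dd_bounds(1)[OF q g] by simp
      have "exp ((real k + 1) * ln (1 + dd q k)) = exp (ln (1 + dd q k)) ^ (k + 1)"
        by (metis exp_of_nat_mult of_nat_Suc Suc_eq_plus1 add.commute)
      then show "exp ((real k + 1) * ln (1 + dd q k)) = (1 + dd q k) ^ (k + 1)" using p by simp
    qed
    ultimately show ?thesis by (simp add: tendsto_cong)
  qed
  have "(\<lambda>k. ln (1 + dd q k) / dd q k * ((1 + dd q k) ^ (k + 1))) \<longlonglongrightarrow> 1 * 1"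
    by (intro tendsto_mult A B)
  moreover have "eventually (\<lambda>k. ln (1 + dd q k) / dd q k * ((1 + dd q k) ^ (k + 1)) = ln (1 + dd q k) / eps q k) sequentially"
    using eventually_good[OF q]
  proof (elim eventually_mono)
    fix k assume g: "good q k"
    have p: "dd q k > 0" using dd_bounds(1)[OF q g] .
    have ep: "eps q k > 0" unfolding eps_def using q by simp
    have e: "(1 + dd q k) ^ (k + 1) = dd q k / eps q k" using dd_bounds(3)[OF q g] by simp
    show "ln (1 + dd q k) / dd q k * ((1 + dd q k) ^ (k + 1)) = ln (1 + dd q k) / eps q k"
      unfolding e using p ep by simp
  qed
  ultimately show ?thesis by (simp add: tendsto_cong)
qed



lemma key_alg:
  fixes q n :: nat and z K :: int and X E :: real
  assumes q: "q \<ge> 2" and n: "n \<ge> 1" and K: "K = \<lceil>log (real q) (real n)\<rceil> + z" "K \<ge> 1"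
    and X: "X > 0" and E: "E = - log 2 X"
  shows "2 powr ((real n - real_of_int K - 2) * E) /
         (real q ^ n / real n * real q powr ((log (real q) (real n) - real_of_int \<lceil>log (real q) (real n)\<rceil>) - real_of_int z - 2)
            * exp (- (real q - 1) * real q powr ((log (real q) (real n) - real_of_int \<lceil>log (real q) (real n)\<rceil>) - real_of_int z - 1)))
       = exp ((real q - 1) * real q powr ((log (real q) (real n) - real_of_int \<lceil>log (real q) (real n)\<rceil>) - real_of_int z - 1)
               * (1 - ln (real q * X) / ((real q - 1) / real q ^ (nat K + 1)))
              + (real (nat K) + 2) * ln (real q * X))"
proof -
  define L where "L = log (real q) (real n)"
  define C where "C = real_of_int \<lceil>L\<rceil>"
  define n' where "n' = real n - real_of_int K - 2"
  define c where "c = (real q - 1) * real q powr (L - C - real_of_int z - 1)"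
  define e where "e = (real q - 1) / real q ^ (nat K + 1)"
  define l where "l = ln (real q * X)"
  have qr: "real q \<ge> 2" using q by simp
  have nr: "real n \<ge> 1" using n by simp
  have kK: "real (nat K) = real_of_int K" using K by simp
  have KC: "real_of_int K = C + real_of_int z" unfolding C_def L_def K by simp
  have nL: "real q powr L = real n" unfolding L_def using qr nr by (intro powr_log_cancel) auto
  have num: "2 powr (n' * E) = exp (- n' * ln X)"
    unfolding E powr_def log_def by simp
  have qn: "real q ^ n = real q powr real n" using qr by (simp add: powr_realpow)
  have den1: "real q ^ n / real n * real q powr (L - C - real_of_int z - 2) = real q powr n'"
  proof -
    have "real q ^ n / real n * real q powr (L - C - real_of_int z - 2)
        = real q powr real n / real q powr L * real q powr (L - C - real_of_int z - 2)"
      by (simp add: qn nL)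
    also have "\<dots> = real q powr (real n - L + (L - C - real_of_int z - 2))"
      by (simp only: powr_diff[symmetric] powr_add[symmetric])
    also have "real n - L + (L - C - real_of_int z - 2) = n'" unfolding n'_def KC by simp
    finally show ?thesis .
  qed
  have den1': "real q powr n' = exp (n' * ln (real q))" using qr unfolding powr_def by simp
  have ce: "c = real n * e"
  proof -
    have "c = (real q - 1) * (real q powr L / real q powr (real_of_int K + 1))"
      unfolding c_def KC by (simp add: powr_diff[symmetric] algebra_simps)
    also have "real q powr (real_of_int K + 1) = real q ^ (nat K + 1)"
      using qr kK by (metis of_nat_Suc Suc_eq_plus1 add.commute powr_realpow of_nat_0_less_iff
                           less_le_trans zero_less_numeral order_less_le_trans of_nat_1 of_nat_add
                           zero_less_two)
    finally show ?thesis unfolding e_def nL by simp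
  qed
  have epos: "e > 0" unfolding e_def using qr by simp
  have lqX: "ln (real q * X) = ln (real q) + ln X" using qr X by (simp add: ln_mult)
  have "2 powr (n' * E) / (real q powr n' * exp (- c)) = exp (c - n' * l)"
    unfolding num den1' l_def lqX by (simp add: exp_add[symmetric] exp_diff[symmetric] algebra_simps)
  also have "c - n' * l = c * (1 - l / e) + (real (nat K) + 2) * l"
    unfolding n'_def kK using ce epos by (simp add: field_simps)
  finally have main: "2 powr (n' * E) / (real q powr n' * exp (- c)) = exp (c * (1 - l / e) + (real (nat K) + 2) * l)" .
  have den: "real q ^ n / real n * real q powr (L - C - real_of_int z - 2) * exp (- (real q - 1) * real q powr (L - C - real_of_int z - 1)) = real q powr n' * exp (- c)"
    unfolding den1 c_def by (simp add: algebra_simps)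
  have "2 powr (n' * E) / (real q ^ n / real n * real q powr (L - C - real_of_int z - 2) * exp (- (real q - 1) * real q powr (L - C - real_of_int z - 1))) = exp (c * (1 - l / e) + (real (nat K) + 2) * l)"
    unfolding den by (rule main)
  then show ?thesis unfolding L_def C_def n'_def c_def l_def e_def .
qed



theorem lemma5:
  fixes q :: nat and z :: int
  assumes "q \<ge> 2"
  shows "((\<lambda>n::nat.
      let k = \<lceil>log (real q) (real n)\<rceil> + z;
          n' = real n - real_of_int k - 2;
          \<Delta> = log (real q) (real n) - real_of_int \<lceil>log (real q) (real n)\<rceil>
      in 2 powr (n' * E_RLL (nat k) q) /
         (real q ^ n / real n * real q powr (\<Delta> - real_of_int z - 2)
            * exp (- (real q - 1) * real q powr (\<Delta> - real_of_int z - 1))))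
    \<longlongrightarrow> 1) sequentially"
proof -
  have q: "q \<ge> 2" using assms .
  have qr: "real q \<ge> 2" using q by simp
  define kk where "kk n = nat (\<lceil>log (real q) (real n)\<rceil> + z)" for n :: nat
  define cc where "cc n = (real q - 1) * real q powr ((log (real q) (real n) - real_of_int \<lceil>log (real q) (real n)\<rceil>) - real_of_int z - 1)" for n :: nat
  define U where "U k = 1 - ln (real q * X q k) / ((real q - 1) / real q ^ (k + 1))" for k
  define V where "V k = (real k + 2) * ln (real q * X q k)" for k
  have kk_lim: "filterlim kk at_top sequentially"
    unfolding filterlim_at_top
  proof
    fix Z :: nat
    define m where "m = Z + nat \<bar>z\<bar>"
    show "eventually (\<lambda>n. Z \<le> kk n) sequentially"
      using eventually_ge_at_top[of "q ^ m"]
    proof (elim eventually_mono)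
      fix n assume n: "q ^ m \<le> n"
      have "real q ^ m \<le> real n" using n by (metis of_nat_le_iff of_nat_power)
      then have "log (real q) (real q ^ m) \<le> log (real q) (real n)"
        using qr by (intro log_mono) auto
      then have "real m \<le> log (real q) (real n)" using qr by simp
      then have "real m \<le> real_of_int \<lceil>log (real q) (real n)\<rceil>" by linarith
      then have "int m \<le> \<lceil>log (real q) (real n)\<rceil>" by linarith
      then show "Z \<le> kk n" unfolding kk_def m_def by linarith
    qed
  qed
  have evg: "eventually (\<lambda>n. good q (kk n)) sequentially"
    using kk_lim eventually_good[OF q] unfolding filterlim_iff by blast
  have ev: "eventually (\<lambda>n. (let k = \<lceil>log (real q) (real n)\<rceil> + z;
          n' = real n - real_of_int k - 2;
          \<Delta> = log (real q) (real n) - real_of_int \<lceil>log (real q) (real n)\<rceil>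
      in 2 powr (n' * E_RLL (nat k) q) /
         (real q ^ n / real n * real q powr (\<Delta> - real_of_int z - 2)
            * exp (- (real q - 1) * real q powr (\<Delta> - real_of_int z - 1))))
       = exp (cc n * U (kk n) + V (kk n))) sequentially"
    using evg eventually_ge_at_top[of 1]
  proof eventually_elim
    case (elim n)
    define K where "K = \<lceil>log (real q) (real n)\<rceil> + z"
    have g: "good q (nat K)" using elim(1) unfolding kk_def K_def .
    have K1: "K \<ge> 1" using g unfolding good_def by linarith
    have Xp: "X q (nat K) > 0" using X_props(1)[OF q g] qr
      by (smt (verit) divide_pos_pos)
    have E: "E_RLL (nat K) q = - log 2 (X q (nat K))" using X_props(4)[OF q g] .
    show ?case
      unfolding Let_def K_def[symmetric] cc_def U_def V_def kk_def
      using key_alg[OF q elim(2) K_def K1 Xp E] by simp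
  qed
  have U: "U \<longlonglongrightarrow> 0"
  proof -
    have "(\<lambda>k. 1 - ln (1 + dd q k) / eps q k) \<longlonglongrightarrow> 1 - 1"
      by (intro tendsto_diff tendsto_const G2[OF q])
    then show ?thesis unfolding U_def dd_def eps_def by simp
  qed
  have V: "V \<longlonglongrightarrow> 0" using G1[OF q] unfolding V_def dd_def by simp
  have Uk: "(\<lambda>n. U (kk n)) \<longlonglongrightarrow> 0" using filterlim_compose[OF U kk_lim] .
  have Vk: "(\<lambda>n. V (kk n)) \<longlonglongrightarrow> 0" using filterlim_compose[OF V kk_lim] .
  define M where "M = (real q - 1) * real q powr (- real_of_int z - 1)"
  have cb: "0 \<le> cc n \<and> cc n \<le> M" for n
  proof -
    have "real q powr ((log (real q) (real n) - real_of_int \<lceil>log (real q) (real n)\<rceil>) - real_of_int z - 1)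
        \<le> real q powr (- real_of_int z - 1)"
      using qr by (intro powr_mono) auto
    then show ?thesis unfolding cc_def M_def using qr by (auto intro: mult_left_mono)
  qed
  have CU: "(\<lambda>n. cc n * U (kk n)) \<longlonglongrightarrow> 0"
  proof (rule tendsto_sandwich[of "\<lambda>n. - (M * \<bar>U (kk n)\<bar>)" _ _ "\<lambda>n. M * \<bar>U (kk n)\<bar>"])
    have b: "\<bar>cc n * U (kk n)\<bar> \<le> M * \<bar>U (kk n)\<bar>" for n
      using cb[of n] by (simp add: abs_mult mult_right_mono)
    show "eventually (\<lambda>n. - (M * \<bar>U (kk n)\<bar>) \<le> cc n * U (kk n)) sequentially"
      using b by (intro always_eventually allI) (metis abs_le_iff minus_le_iff)
    show "eventually (\<lambda>n. cc n * U (kk n) \<le> M * \<bar>U (kk n)\<bar>) sequentially"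
      using b by (intro always_eventually allI) (metis abs_le_iff)
    have "(\<lambda>n. M * \<bar>U (kk n)\<bar>) \<longlonglongrightarrow> M * \<bar>0\<bar>" by (intro tendsto_intros Uk)
    then show "(\<lambda>n. M * \<bar>U (kk n)\<bar>) \<longlonglongrightarrow> 0" by simp
    then show "(\<lambda>n. - (M * \<bar>U (kk n)\<bar>)) \<longlonglongrightarrow> 0" using tendsto_minus by fastforce
  qed
  have "(\<lambda>n. exp (cc n * U (kk n) + V (kk n))) \<longlonglongrightarrow> exp (0 + 0)"
    by (intro tendsto_exp tendsto_add CU Vk)
  then have "(\<lambda>n. exp (cc n * U (kk n) + V (kk n))) \<longlonglongrightarrow> 1" by simp
  then show ?thesis using tendsto_cong[OF ev] by blast
qed


end
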